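(* Let $f\in\mathbb{R}^n\setminus\mathbb{Z}^n$ and $B,L\in\mathcal{C}^n_f$. The following are equivalent: (i) $C_B(R,f)\subseteq C_L(R,f)$ for every $k\in\mathbb{N}$ and every $R\in\mathbb{R}^{n\times k}$; (ii) $B\supseteq L$; (iii) $\psi_{B-f}\le\psi_{L-f}$ pointwise on $\mathbb{R}^n$; (iv) $\rho_f(B,L)\le1$.
   Context: $\mathcal{C}^n_f$ is the family of all $n$-dimensional closed convex subsets of $\mathbb{R}^n$ containing $f$ in their interior. For $B$ closed convex with $0\in\operatorname{int}(B)$, $\psi_B(r)=\inf\{\lambda>0:r\in\lambda B\}$. For $R=(r_1,\dots,r_k)$ and $B\in\mathcal{C}^n_f$, $C_B(R,f)=\{s\in\mathbb{R}^k_{\ge0}:\sum_{j=1}^k s_j\psi_{B-f}(r_j)\ge1\}$. $\rho_f(B,L)=\inf\{\alpha>0:C_B(R,f)\subseteq\frac1\alpha C_L(R,f)$ for all $k\in\mathbb{N}$ and all $R\in\mathbb{R}^{n\times k}\}$. *)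

theory Defs
  imports "HOL-Analysis.Analysis"
begin

definition convC :: "real^'n \<Rightarrow> (real^'n) set \<Rightarrow> bool" where
  "convC f B \<longleftrightarrow> closed B \<and> convex B \<and> aff_dim B = int CARD('n) \<and> f \<in> interior B"

definition psi :: "(real^'n) set \<Rightarrow> real^'n \<Rightarrow> real" where
  "psi B r = Inf {t. t > 0 \<and> r \<in> (\<lambda>x. t *\<^sub>R x) ` B}"

definition shift :: "(real^'n) set \<Rightarrow> real^'n \<Rightarrow> (real^'n) set" where
  "shift B f = (\<lambda>x. x - f) ` B"

text \<open>C_B(R,f); R = (r_1,...,r_k) is a list of k vectors (columns), s in R^k_{>=0} is a list of length k.\<close>
definition CB :: "(real^'n) set \<Rightarrow> (real^'n) list \<Rightarrow> real^'n \<Rightarrow> real list set" where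
  "CB B R f = {s. length s = length R \<and> (\<forall>x\<in>set s. x \<ge> 0) \<and>
      (\<Sum>j<length R. s ! j * psi (shift B f) (R ! j)) \<ge> 1}"

text \<open>rho_f(B,L), valued in extended reals (Inf of the empty set is +infinity).\<close>
definition rho :: "real^'n \<Rightarrow> (real^'n) set \<Rightarrow> (real^'n) set \<Rightarrow> ereal" where
  "rho f B L = Inf (ereal ` {\<alpha>::real. \<alpha> > 0 \<and>
      (\<forall>R::(real^'n) list. CB B R f \<subseteq> (map (\<lambda>x. x / \<alpha>)) ` CB L R f)})"

end

theory Submission
  imports Defs
begin

lemma psi_ne:
  fixes K :: "(real^'n) set"
  assumes "0 \<in> interior K"
  shows "\<exists>t>0. r \<in> (\<lambda>x. t *\<^sub>R x) ` K"
proof -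
  obtain e where e: "e > 0" "ball 0 e \<subseteq> K"
    using assms mem_interior by blast
  define t where "t = 2 * (norm r + 1) / e"
  have t: "t > 0" unfolding t_def using e by (intro divide_pos_pos) (auto intro: add_nonneg_pos)
  have "norm ((1/t) *\<^sub>R r) = norm r * e / (2 * (norm r + 1))"
    using t e by (simp add: t_def)
  also have "\<dots> < e"
    using e by (simp add: field_simps add_pos_nonneg add_nonneg_pos)
  finally have "(1/t) *\<^sub>R r \<in> K" using e by auto
  moreover have "r = t *\<^sub>R ((1/t) *\<^sub>R r)" using t by simp
  ultimately show ?thesis using t by blast
qed

lemma psi_nonneg:
  fixes K :: "(real^'n) set"
  assumes "0 \<in> interior K"
  shows "psi K r \<ge> 0"
  unfolding psi_def
  using psi_ne[OF assms, of r] by (intro cInf_greatest) auto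

lemma psi_le1:
  fixes K :: "(real^'n) set"
  assumes "r \<in> K"
  shows "psi K r \<le> 1"
  unfolding psi_def
proof (rule cInf_lower)
  show "1 \<in> {t. 0 < t \<and> r \<in> (*\<^sub>R) t ` K}" using assms by auto
  show "bdd_below {t::real. 0 < t \<and> r \<in> (*\<^sub>R) t ` K}"
    by (rule bdd_belowI[of _ 0]) auto
qed

lemma psi_mono:
  fixes K K' :: "(real^'n) set"
  assumes "0 \<in> interior K" "K \<subseteq> K'"
  shows "psi K' r \<le> psi K r"
  unfolding psi_def
proof (rule cInf_superset_mono)
  show "{t. 0 < t \<and> r \<in> (*\<^sub>R) t ` K} \<noteq> {}" using psi_ne[OF assms(1), of r] by auto
  show "bdd_below {t::real. 0 < t \<and> r \<in> (*\<^sub>R) t ` K'}"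
    by (rule bdd_belowI[of _ 0]) auto
  show "{t. 0 < t \<and> r \<in> (*\<^sub>R) t ` K} \<subseteq> {t. 0 < t \<and> r \<in> (*\<^sub>R) t ` K'}"
    using assms(2) by auto
qed

lemma psi_le1_mem:
  fixes K :: "(real^'n) set"
  assumes cl: "closed K" and cv: "convex K" and i: "0 \<in> interior K" and p: "psi K r \<le> 1"
  shows "r \<in> K"
proof -
  have K0: "0 \<in> K" using i interior_subset by blast
  define S where "S = {c::real. c *\<^sub>R r \<in> K}"
  have clS: "closed S"
  proof -
    have "S = (\<lambda>c::real. c *\<^sub>R r) -` K" by (auto simp: S_def)
    then show ?thesis using cl by (simp add: continuous_closed_vimage)
  qed
  have sub: "{0<..<1} \<subseteq> S"
  proof
    fix c :: real assume c: "c \<in> {0<..<1}"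
    define t where "t = 1 / c"
    have t: "t > 1" using c by (simp add: t_def)
    have "Inf {t. 0 < t \<and> r \<in> (*\<^sub>R) t ` K} < t" using p t unfolding psi_def by linarith
    then obtain s where s: "s > 0" "r \<in> (*\<^sub>R) s ` K" "s < t"
      using cInf_lessD[of "{t. 0 < t \<and> r \<in> (*\<^sub>R) t ` K}" t] psi_ne[OF i, of r] by auto
    then obtain k where k: "k \<in> K" "r = s *\<^sub>R k" by auto
    have u: "c * s \<le> 1" "0 \<le> c * s" using s c t_def
      by (auto simp: field_simps)
    have "(c * s) *\<^sub>R k + (1 - c * s) *\<^sub>R 0 \<in> K"
      using cv k(1) K0 u by (intro convexD) auto
    then show "c \<in> S" using k by (simp add: S_def)
  qed
  have "closure {0<..<(1::real)} \<subseteq> S" using closure_minimal[OF sub clS] .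
  then have "1 \<in> S" by auto
  then show ?thesis by (simp add: S_def)
qed

lemma shift_props:
  fixes B :: "(real^'n) set"
  assumes "convC f B"
  shows "closed (shift B f)" "convex (shift B f)" "0 \<in> interior (shift B f)"
proof -
  have eq: "shift B f = (+) (-f) ` B" by (auto simp: shift_def)
  show "closed (shift B f)" using assms unfolding eq convC_def by (intro closed_translation) auto
  show "convex (shift B f)" using assms unfolding eq convC_def by (intro convex_translation) auto
  obtain e where e: "e > 0" "ball f e \<subseteq> B" using assms unfolding convC_def
    using mem_interior by blast
  have "ball 0 e \<subseteq> shift B f"
  proof
    fix y assume "y \<in> ball (0::real^'n) e"
    then have "y + f \<in> ball f e" by (simp add: dist_norm)
    then have "y + f \<in> B" using e by auto
    then show "y \<in> shift B f" unfolding shift_def by (auto intro: image_eqI[where x="y+f"])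
  qed
  then show "0 \<in> interior (shift B f)" using e(1) mem_interior by blast
qed

lemma CB_single:
  "(s \<in> CB B [r] f) \<longleftrightarrow> (\<exists>a. s = [a] \<and> a \<ge> 0 \<and> a * psi (shift B f) r \<ge> 1)"
  by (cases s rule: list.exhaust) (auto simp: CB_def)

theorem proposition3p11:
  fixes f :: "real^'n" and B L :: "(real^'n) set"
  assumes "\<exists>i. f $ i \<notin> \<int>"
    and "convC f B" and "convC f L"
  shows "((\<forall>R::(real^'n) list. CB B R f \<subseteq> CB L R f) \<longleftrightarrow> L \<subseteq> B)
    \<and> (L \<subseteq> B \<longleftrightarrow> (\<forall>r. psi (shift B f) r \<le> psi (shift L f) r))
    \<and> ((\<forall>r. psi (shift B f) r \<le> psi (shift L f) r) \<longleftrightarrow> rho f B L \<le> 1)"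
proof -
  let ?B = "shift B f" and ?L = "shift L f"
  note SB = shift_props[OF assms(2)] and SL = shift_props[OF assms(3)]
  let ?P = "\<forall>r. psi ?B r \<le> psi ?L r"
  have P2: "L \<subseteq> B \<longleftrightarrow> ?P"
  proof
    assume "L \<subseteq> B"
    then have "?L \<subseteq> ?B" by (auto simp: shift_def)
    then show ?P using psi_mono[OF SL(3)] by blast
  next
    assume P: ?P
    show "L \<subseteq> B"
    proof
      fix x assume x: "x \<in> L"
      then have "x - f \<in> ?L" by (auto simp: shift_def)
      then have "psi ?L (x - f) \<le> 1" by (rule psi_le1)
      then have "psi ?B (x - f) \<le> 1" using P order_trans by blast
      then have "x - f \<in> ?B" using psi_le1_mem[OF SB] by blast
      then show "x \<in> B" by (auto simp: shift_def)
    qed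
  qed
  have key: "psi ?B r \<le> a * psi ?L r"
    if a: "a > 0" and H: "\<And>s. s \<in> CB B [r] f \<Longrightarrow> a * (s!0) * psi ?L r \<ge> 1" for r a
  proof (cases "psi ?B r > 0")
    case True
    have "[1 / psi ?B r] \<in> CB B [r] f" using True by (simp add: CB_single)
    from H[OF this] have "a * (1 / psi ?B r) * psi ?L r \<ge> 1" by simp
    then show ?thesis using True by (simp add: field_simps)
  next
    case False
    have "0 \<le> a * psi ?L r" using a psi_nonneg[OF SL(3), of r] by simp
    then show ?thesis using False by linarith
  qed
  have P1: "(\<forall>R::(real^'n) list. CB B R f \<subseteq> CB L R f) \<longleftrightarrow> ?P"
  proof
    assume I: "\<forall>R::(real^'n) list. CB B R f \<subseteq> CB L R f"
    show ?P
    proof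
      fix r
      have "psi ?B r \<le> 1 * psi ?L r"
      proof (rule key)
        fix s assume "s \<in> CB B [r] f"
        then have "s \<in> CB L [r] f" using I by blast
        then show "1 * (s!0) * psi ?L r \<ge> 1" by (auto simp: CB_single)
      qed simp
      then show "psi ?B r \<le> psi ?L r" by simp
    qed
  next
    assume P: ?P
    show "\<forall>R::(real^'n) list. CB B R f \<subseteq> CB L R f"
    proof (intro allI subsetI)
      fix R :: "(real^'n) list" and s assume s: "s \<in> CB B R f"
      have "(\<Sum>j<length R. s ! j * psi ?B (R ! j)) \<le> (\<Sum>j<length R. s ! j * psi ?L (R ! j))"
      proof (rule sum_mono)
        fix j assume "j \<in> {..<length R}"
        then have "s ! j \<ge> 0" using s by (auto simp: CB_def)
        then show "s ! j * psi ?B (R ! j) \<le> s ! j * psi ?L (R ! j)"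
          using P by (simp add: mult_left_mono)
      qed
      then show "s \<in> CB L R f" using s by (auto simp: CB_def)
    qed
  qed
  define A where "A = {\<alpha>::real. \<alpha> > 0 \<and>
      (\<forall>R::(real^'n) list. CB B R f \<subseteq> (map (\<lambda>x. x / \<alpha>)) ` CB L R f)}"
  have rhoA: "rho f B L = Inf (ereal ` A)" by (simp add: rho_def A_def)
  have P3: "?P \<longleftrightarrow> rho f B L \<le> 1"
  proof
    assume P: ?P
    have "1 \<in> A" using P1 P by (auto simp: A_def)
    then have "Inf (ereal ` A) \<le> ereal 1" by (intro Inf_lower) auto
    then show "rho f B L \<le> 1" by (simp add: rhoA one_ereal_def)
  next
    assume R: "rho f B L \<le> 1"
    show ?P
    proof (rule ccontr)
      assume "\<not> ?P"
      then obtain r where r: "psi ?B r > psi ?L r" by (auto simp: not_le)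
      define l where "l = psi ?L r"
      define d where "d = psi ?B r - l"
      have l0: "l \<ge> 0" using psi_nonneg[OF SL(3)] by (simp add: l_def)
      have d0: "d > 0" using r by (simp add: d_def l_def)
      define c where "c = 1 + d / (l + 1)"
      have c1: "c > 1" using d0 l0 by (simp add: c_def)
      have "ereal c \<le> Inf (ereal ` A)"
      proof (rule Inf_greatest)
        fix x assume "x \<in> ereal ` A"
        then obtain \<alpha> where al: "\<alpha> \<in> A" "x = ereal \<alpha>" by auto
        have a0: "\<alpha> > 0" using al by (simp add: A_def)
        have "psi ?B r \<le> \<alpha> * psi ?L r"
        proof (rule key[OF a0])
          fix s assume "s \<in> CB B [r] f"
          then have "s \<in> map (\<lambda>x. x / \<alpha>) ` CB L [r] f" using al by (auto simp: A_def)
          then obtain t where t: "t \<in> CB L [r] f" "s = map (\<lambda>x. x / \<alpha>) t" by auto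
          then obtain b where b: "t = [b]" "b * psi ?L r \<ge> 1" by (auto simp: CB_single)
          show "\<alpha> * (s!0) * psi ?L r \<ge> 1" using t b a0 by simp
        qed
        then have H: "l + d \<le> \<alpha> * l" by (simp add: d_def l_def)
        show "ereal c \<le> x"
        proof (rule ccontr)
          assume "\<not> ereal c \<le> x"
          then have ac: "\<alpha> < c" using al by simp
          have "\<alpha> * l \<le> c * l" using ac l0 by (simp add: mult_right_mono)
          also have "c * l = l + d * (l / (l + 1))" using l0 by (simp add: c_def field_simps)
          also have "\<dots> < l + d"
          proof -
            have "l / (l+1) < 1" using l0 by simp
            then have "d * (l / (l + 1)) < d * 1" using d0 by (intro mult_strict_left_mono) auto
            then show ?thesis by simp
          qed
          finally show False using H by simp
        qed
      qed
      then have "ereal c \<le> 1" using R rhoA by (metis order_trans)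
      then show False using c1 by (simp add: one_ereal_def)
    qed
  qed
  show ?thesis using P1 P2 P3 by blast
qed

end
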